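(* Consider the ergodic Markov process described in the context, with equilibrium distribution $p$. If $p_1,\dots,p_{2^cK}:W\to\mathbb C$ are $2^cK$ linearly independent, absolutely convergent solutions of the inner equations, then there are (possibly complex-valued) constants $\alpha_1,\dots,\alpha_{2^cK}$, uniquely determined (by the equilibrium equations for the states in $V$ and the states $\mathbf n\in W$ with $n_0<K$, together with the normalization condition), such that \[ p(\mathbf n)=\sum_{j=1}^{2^cK}\alpha_j p_j(\mathbf n),\qquad \mathbf n\in W. \]
   Context: Fix integers $c\ge 1$ and $K\ge 1$. Consider an irreducible continuous-time Markov process on the state space $V\cup W$, where $V$ is a finite set and $W=\{\mathbf n=(n_0,n_1,\dots,n_c): n_0\in\{0,1,2,\dots\},\ n_i\in\{0,1\},\ i=1,\dots,c\}$. For each $i\in\{1,\dots,c\}$ and each integer $k\le K$ there are nonnegative rates $a_{k,i},b_{k,i},c_{k,i},d_{k,i}$. From a state $\mathbf n\in W$, for each $i$ and each $k\in\{-n_0,\dots,K\}$, the process jumps (changing only coordinates $0$ and $i$) from $(n_0,n_i)=(n_0,0)$ to $(n_0+k,1)$ at rate $a_{k,i}$ and to $(n_0+k,0)$ at rate $b_{k,i}$, and from $(n_0,n_i)=(n_0,1)$ to $(n_0+k,1)$ at rate $c_{k,i}$ and to $(n_0+k,0)$ at rate $d_{k,i}$; moreover from $\mathbf n$ it jumps into $V$ with total rate $\sum_{i=1}^c\sum_{k\le -n_0-1}\bigl((1-n_i)(a_{k,i}+b_{k,i})+n_i(c_{k,i}+d_{k,i})\bigr)$. There are no other transitions out of $W$.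 From states in $V$ no transitions are possible to states $\mathbf n\in W$ with $n_0\ge K$. All total outgoing rates are finite. The process is assumed ergodic and $p(\mathbf n)$ denotes its equilibrium probability of state $\mathbf n$. Let $e_i$ be the vector of length $c+1$ (indexed $0,\dots,c$) with a $1$ in position $i$ and zeros elsewhere. The inner equations are, for a function $q:W\to\mathbb C$ and all $\mathbf n\in W$ with $n_0\ge K$: \[\sum_{i=1}^c\sum_{k=-\infty}^K\bigl((1-n_i)(a_{k,i}+b_{k,i})+n_i(c_{k,i}+d_{k,i})\bigr)q(\mathbf n)=\sum_{i=1}^c\sum_{k=-\infty}^K\Bigl((1-n_i)\bigl(b_{k,i}q(\mathbf n-ke_0)+d_{k,i}q(\mathbf n-ke_0+e_i)\bigr)+n_i\bigl(a_{k,i}q(\mathbf n-ke_0-e_i)+c_{k,i}q(\mathbf n-ke_0)\bigr)\Bigr).\] A solution $q$ is called absolutely convergent if $\sum_{\mathbf n\in W}|q(\mathbf n)|<\infty$. *)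

theory Defs
  imports "HOL-Analysis.Analysis"
begin

text \<open>States of W: a pair (n0, A) where A is the set of indices i in {1..c} with n_i = 1.
  The full state space is V + W, with V a finite type.\<close>

type_synonym wstate = "nat \<times> nat set"

definition Wset :: "nat \<Rightarrow> wstate set" where
  "Wset c = {w. snd w \<subseteq> {1..c}}"

definition states :: "'v set \<Rightarrow> nat \<Rightarrow> ('v + wstate) set" where
  "states V c = Inl ` V \<union> Inr ` Wset c"

definition jump_rate ::
  "int \<Rightarrow> (int \<Rightarrow> nat \<Rightarrow> real) \<Rightarrow> (int \<Rightarrow> nat \<Rightarrow> real) \<Rightarrow> (int \<Rightarrow> nat \<Rightarrow> real)
   \<Rightarrow> (int \<Rightarrow> nat \<Rightarrow> real) \<Rightarrow> nat \<Rightarrow> wstate \<Rightarrow> wstate \<Rightarrow> real" where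
  "jump_rate K a b cc d i w w' =
     (let k = int (fst w') - int (fst w) in
      if snd w - {i} = snd w' - {i} \<and> k \<le> K then
        (if i \<notin> snd w then (if i \<in> snd w' then a k i else b k i)
         else (if i \<in> snd w' then cc k i else d k i))
      else 0)"

definition wrate ::
  "nat \<Rightarrow> int \<Rightarrow> (int \<Rightarrow> nat \<Rightarrow> real) \<Rightarrow> (int \<Rightarrow> nat \<Rightarrow> real) \<Rightarrow> (int \<Rightarrow> nat \<Rightarrow> real)
   \<Rightarrow> (int \<Rightarrow> nat \<Rightarrow> real) \<Rightarrow> wstate \<Rightarrow> wstate \<Rightarrow> real" where
  "wrate c K a b cc d w w' = (\<Sum>i\<in>{1..c}. jump_rate K a b cc d i w w')"

definition to_V_rate ::
  "nat \<Rightarrow> (int \<Rightarrow> nat \<Rightarrow> real) \<Rightarrow> (int \<Rightarrow> nat \<Rightarrow> real) \<Rightarrow> (int \<Rightarrow> nat \<Rightarrow> real)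
   \<Rightarrow> (int \<Rightarrow> nat \<Rightarrow> real) \<Rightarrow> wstate \<Rightarrow> real" where
  "to_V_rate c a b cc d w =
     (\<Sum>i\<in>{1..c}. \<Sum>\<^sub>\<infinity>k\<in>{..- int (fst w) - 1}.
        (if i \<in> snd w then cc k i + d k i else a k i + b k i))"

definition out_rate :: "'s set \<Rightarrow> ('s \<Rightarrow> 's \<Rightarrow> real) \<Rightarrow> 's \<Rightarrow> real" where
  "out_rate S Q x = (\<Sum>\<^sub>\<infinity>y\<in>S - {x}. Q x y)"

definition irreducible_chain :: "'s set \<Rightarrow> ('s \<Rightarrow> 's \<Rightarrow> real) \<Rightarrow> bool" where
  "irreducible_chain S Q \<longleftrightarrow>
     (\<forall>x\<in>S. \<forall>y\<in>S. (\<lambda>u v. u \<in> S \<and> v \<in> S \<and> u \<noteq> v \<and> Q u v > 0)\<^sup>*\<^sup>* x y)"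

definition is_equilibrium :: "'s set \<Rightarrow> ('s \<Rightarrow> 's \<Rightarrow> real) \<Rightarrow> ('s \<Rightarrow> real) \<Rightarrow> bool" where
  "is_equilibrium S Q p \<longleftrightarrow>
     (\<forall>x\<in>S. p x \<ge> 0) \<and> (p has_sum 1) S \<and>
     (\<forall>x\<in>S. p x * out_rate S Q x = (\<Sum>\<^sub>\<infinity>y\<in>S - {x}. p y * Q y x))"

definition inner_eqs ::
  "nat \<Rightarrow> int \<Rightarrow> (int \<Rightarrow> nat \<Rightarrow> real) \<Rightarrow> (int \<Rightarrow> nat \<Rightarrow> real) \<Rightarrow> (int \<Rightarrow> nat \<Rightarrow> real)
   \<Rightarrow> (int \<Rightarrow> nat \<Rightarrow> real) \<Rightarrow> (wstate \<Rightarrow> complex) \<Rightarrow> bool" where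
  "inner_eqs c K a b cc d q \<longleftrightarrow>
    (\<forall>n0 A. (n0, A) \<in> Wset c \<and> int n0 \<ge> K \<longrightarrow>
      (\<Sum>i\<in>{1..c}. \<Sum>\<^sub>\<infinity>k\<in>{..K}.
          complex_of_real (if i \<in> A then cc k i + d k i else a k i + b k i)) * q (n0, A)
      = (\<Sum>i\<in>{1..c}. \<Sum>\<^sub>\<infinity>k\<in>{..K}.
          (if i \<notin> A then
             complex_of_real (b k i) * q (nat (int n0 - k), A)
             + complex_of_real (d k i) * q (nat (int n0 - k), insert i A)
           else
             complex_of_real (a k i) * q (nat (int n0 - k), A - {i})
             + complex_of_real (cc k i) * q (nat (int n0 - k), A))))"

definition cand :: "nat \<Rightarrow> (nat \<Rightarrow> wstate \<Rightarrow> complex) \<Rightarrow> (nat \<Rightarrow> complex)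
    \<Rightarrow> ('v \<Rightarrow> complex) \<Rightarrow> 'v + wstate \<Rightarrow> complex" where
  "cand N P \<beta> u x = (case x of Inl v \<Rightarrow> u v | Inr w \<Rightarrow> (\<Sum>j<N. \<beta> j * P j w))"

definition boundary_sys ::
  "'v set \<Rightarrow> nat \<Rightarrow> int \<Rightarrow> ('v + wstate \<Rightarrow> 'v + wstate \<Rightarrow> real) \<Rightarrow> nat \<Rightarrow> (nat \<Rightarrow> wstate \<Rightarrow> complex)
   \<Rightarrow> (nat \<Rightarrow> complex) \<Rightarrow> ('v \<Rightarrow> complex) \<Rightarrow> bool" where
  "boundary_sys V c K Q N P \<beta> u \<longleftrightarrow>
     (\<forall>x\<in>states V c. (case x of Inl _ \<Rightarrow> True | Inr w \<Rightarrow> int (fst w) < K) \<longrightarrow>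
        cand N P \<beta> u x * complex_of_real (out_rate (states V c) Q x)
        = (\<Sum>\<^sub>\<infinity>y\<in>states V c - {x}. cand N P \<beta> u y * complex_of_real (Q y x)))
     \<and> (\<Sum>\<^sub>\<infinity>x\<in>states V c. cand N P \<beta> u x) = 1"

end

theory Submission
  imports Defs "Jordan_Normal_Form.Determinant"
begin


lemma has_sum_diff':
  fixes f g :: "'a \<Rightarrow> 'b::topological_ab_group_add"
  assumes "(f has_sum a) A" "(g has_sum b) A"
  shows "((\<lambda>x. f x - g x) has_sum (a - b)) A"
proof -
  have "((\<lambda>x. - g x) has_sum (- b)) A" using assms(2) by (simp add: has_sum_uminus)
  from has_sum_add[OF assms(1) this] show ?thesis by simp
qed

lemma summable_on_diff':
  fixes f g :: "'a \<Rightarrow> 'b::topological_ab_group_add"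
  assumes "f summable_on A" "g summable_on A"
  shows "(\<lambda>x. f x - g x) summable_on A"
  using has_sum_diff' assms unfolding summable_on_def by blast

lemma infsum_diff':
  fixes f g :: "'a \<Rightarrow> 'b::{topological_ab_group_add,t2_space}"
  assumes "f summable_on A" "g summable_on A"
  shows "infsum (\<lambda>x. f x - g x) A = infsum f A - infsum g A"
  using has_sum_diff'[OF has_sum_infsum[OF assms(1)] has_sum_infsum[OF assms(2)]] infsumI by blast

locale bchain =
  fixes S :: "'s set" and Q :: "'s \<Rightarrow> 's \<Rightarrow> real" and M :: real
  assumes Qnn: "\<And>x y. x \<in> S \<Longrightarrow> y \<in> S \<Longrightarrow> x \<noteq> y \<Longrightarrow> Q x y \<ge> 0"
    and Qsum: "\<And>x. x \<in> S \<Longrightarrow> Q x summable_on (S - {x})"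
    and bound: "\<And>x. x \<in> S \<Longrightarrow> out_rate S Q x \<le> M"
begin

lemma out_nonneg: "x \<in> S \<Longrightarrow> out_rate S Q x \<ge> 0"
  unfolding out_rate_def by (rule infsum_nonneg) (use Qnn in auto)

lemma Q_le_out: assumes "x \<in> S" "y \<in> S" "x \<noteq> y" shows "Q x y \<le> out_rate S Q x"
proof -
  have "sum (Q x) {y} \<le> infsum (Q x) (S - {x})"
    by (rule finite_sum_le_infsum) (use assms Qsum Qnn in auto)
  thus ?thesis unfolding out_rate_def by simp
qed

lemma M_nonneg: "x \<in> S \<Longrightarrow> M \<ge> 0"
  using out_nonneg bound by (meson order.trans)

lemma inflow_abs_summable:
  fixes f :: "'s \<Rightarrow> 'b::banach"
  assumes f: "(\<lambda>x. norm (f x)) summable_on S" and x: "x \<in> S"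
  shows "(\<lambda>y. norm (Q y x *\<^sub>R f y)) summable_on (S - {x})"
proof -
  have "(\<lambda>y. M * norm (f y)) summable_on (S - {x})"
    using summable_on_subset[OF f] by (intro summable_on_cmult_right) auto
  thus ?thesis
  proof (rule summable_on_comparison_test)
    fix y assume y: "y \<in> S - {x}"
    have "Q y x \<le> M" using Q_le_out[of y x] bound[of y] y x by auto
    moreover have "Q y x \<ge> 0" using Qnn y x by auto
    ultimately show "norm (Q y x *\<^sub>R f y) \<le> M * norm (f y)"
      by (simp add: mult_right_mono)
  qed simp
qed

lemma inflow_summable:
  fixes f :: "'s \<Rightarrow> 'b::banach"
  assumes f: "(\<lambda>x. norm (f x)) summable_on S" and x: "x \<in> S"
  shows "(\<lambda>y. Q y x *\<^sub>R f y) summable_on (S - {x})"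
  by (rule abs_summable_summable[OF inflow_abs_summable[OF assms]])

lemma conservation:
  fixes f :: "'s \<Rightarrow> 'b::banach"
  assumes f: "(\<lambda>x. norm (f x)) summable_on S"
  shows "(\<lambda>x. out_rate S Q x *\<^sub>R f x) summable_on S"
    and "(\<lambda>x. \<Sum>\<^sub>\<infinity>y\<in>S - {x}. Q y x *\<^sub>R f y) summable_on S"
    and "(\<Sum>\<^sub>\<infinity>x\<in>S. out_rate S Q x *\<^sub>R f x) = (\<Sum>\<^sub>\<infinity>x\<in>S. \<Sum>\<^sub>\<infinity>y\<in>S - {x}. Q y x *\<^sub>R f y)"
proof -
  define g where "g = (\<lambda>(y,x). Q y x *\<^sub>R f y)"
  define D where "D = Sigma S (\<lambda>y. S - {y})"
  have rowsum: "((\<lambda>x. g (y, x)) has_sum out_rate S Q y *\<^sub>R f y) (S - {y})" if "y \<in> S" for y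
    unfolding g_def out_rate_def
    using has_sum_bounded_linear[OF bounded_linear_scaleR_left[of "f y"], of "Q y" "S - {y}"] Qsum[OF that]
    by auto
  have rownorm: "((\<lambda>x. norm (g (y, x))) has_sum out_rate S Q y * norm (f y)) (S - {y})" if "y \<in> S" for y
  proof -
    have "((\<lambda>x. Q y x * norm (f y)) has_sum out_rate S Q y * norm (f y)) (S - {y})"
      unfolding out_rate_def using Qsum[OF that] by (auto intro: has_sum_cmult_left)
    moreover have "norm (g (y, x)) = Q y x * norm (f y)" if "x \<in> S - {y}" for x
      using Qnn[of y x] that \<open>y \<in> S\<close> unfolding g_def by auto
    ultimately show ?thesis using has_sum_cong[of "S - {y}" "\<lambda>x. norm (g (y, x))" "\<lambda>x. Q y x * norm (f y)"] by metis
  qed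
  have outM: "(\<lambda>y. norm (out_rate S Q y * norm (f y))) summable_on S"
  proof -
    have "(\<lambda>y. M * norm (f y)) summable_on S" using f by (intro summable_on_cmult_right)
    thus ?thesis
    proof (rule summable_on_comparison_test)
      fix y assume "y \<in> S"
      thus "norm (out_rate S Q y * norm (f y)) \<le> M * norm (f y)"
        using out_nonneg bound by (simp add: mult_right_mono)
    qed simp
  qed
  have gD: "(\<lambda>z. norm (g z)) summable_on D" unfolding D_def
  proof (subst Infinite_Sum.abs_summable_on_Sigma_iff, intro conjI ballI)
    fix y assume "y \<in> S" thus "(\<lambda>x. norm (g (y, x))) summable_on S - {y}"
      using rownorm has_sum_imp_summable by blast
  next
    have e: "norm (\<Sum>\<^sub>\<infinity>x\<in>S - {y}. norm (g (y, x))) = norm (out_rate S Q y * norm (f y))" if "y\<in>S" for y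
      using rownorm[OF that] infsumI by metis
    show "(\<lambda>y. norm (\<Sum>\<^sub>\<infinity>x\<in>S - {y}. norm (g (y, x)))) summable_on S"
      using outM summable_on_cong[of S "\<lambda>y. norm (\<Sum>\<^sub>\<infinity>x\<in>S - {y}. norm (g (y, x)))" "\<lambda>y. norm (out_rate S Q y * norm (f y))"] e
      by metis
  qed
  hence gDs: "g summable_on D" using abs_summable_summable by blast
  have A: "(\<Sum>\<^sub>\<infinity>y\<in>S. \<Sum>\<^sub>\<infinity>x\<in>S - {y}. g (y,x)) = infsum g D"
    unfolding D_def by (rule infsum_Sigma_banach) (use gDs D_def in simp)
  have A': "(\<lambda>y. \<Sum>\<^sub>\<infinity>x\<in>S - {y}. g (y,x)) summable_on S"
    unfolding D_def by (rule summable_on_Sigma_banach) (use gDs D_def in simp)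
  have eq1: "(\<Sum>\<^sub>\<infinity>x\<in>S - {y}. g (y,x)) = out_rate S Q y *\<^sub>R f y" if "y \<in> S" for y
    using rowsum[OF that] infsumI by blast
  show s1: "(\<lambda>x. out_rate S Q x *\<^sub>R f x) summable_on S"
    using A' summable_on_cong[of S "\<lambda>y. \<Sum>\<^sub>\<infinity>x\<in>S - {y}. g (y,x)" "\<lambda>x. out_rate S Q x *\<^sub>R f x"] eq1 by metis
  define D' where "D' = Sigma S (\<lambda>x. S - {x})"
  have bij: "D = (\<lambda>(u,v). (v,u)) ` D'" unfolding D_def D'_def by auto
  have injs: "inj_on (\<lambda>(u,v). (v,u)) D'" by (auto simp: inj_on_def)
  have gD's: "(g \<circ> (\<lambda>(u,v). (v,u))) summable_on D'"
    using gDs unfolding bij by (subst (asm) summable_on_reindex[OF injs])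
  have B: "infsum g D = infsum (g \<circ> (\<lambda>(u,v). (v,u))) D'"
    unfolding bij by (rule infsum_reindex[OF injs])
  have C: "infsum (g \<circ> (\<lambda>(u,v). (v,u))) D' = (\<Sum>\<^sub>\<infinity>x\<in>S. \<Sum>\<^sub>\<infinity>y\<in>S - {x}. (g \<circ> (\<lambda>(u,v). (v,u))) (x,y))"
    unfolding D'_def by (rule infsum_Sigma_banach[symmetric]) (use gD's D'_def in \<open>simp add: o_def case_prod_unfold\<close>)
  have C': "(\<lambda>x. \<Sum>\<^sub>\<infinity>y\<in>S - {x}. (g \<circ> (\<lambda>(u,v). (v,u))) (x,y)) summable_on S"
    unfolding D'_def by (rule summable_on_Sigma_banach) (use gD's D'_def in \<open>simp add: o_def case_prod_unfold\<close>)
  show "(\<lambda>x. \<Sum>\<^sub>\<infinity>y\<in>S - {x}. Q y x *\<^sub>R f y) summable_on S"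
    using C' by (simp add: g_def)
  have "(\<Sum>\<^sub>\<infinity>x\<in>S. out_rate S Q x *\<^sub>R f x) = (\<Sum>\<^sub>\<infinity>y\<in>S. \<Sum>\<^sub>\<infinity>x\<in>S - {y}. g (y,x))"
    by (rule infsum_cong) (simp add: eq1)
  also have "\<dots> = (\<Sum>\<^sub>\<infinity>x\<in>S. \<Sum>\<^sub>\<infinity>y\<in>S - {x}. (g \<circ> (\<lambda>(u,v). (v,u))) (x,y))" using A B C by simp
  finally show "(\<Sum>\<^sub>\<infinity>x\<in>S. out_rate S Q x *\<^sub>R f x) = (\<Sum>\<^sub>\<infinity>x\<in>S. \<Sum>\<^sub>\<infinity>y\<in>S - {x}. Q y x *\<^sub>R f y)"
    by (simp add: g_def)
qed

lemma single_le_infsum: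
  fixes h :: "'s \<Rightarrow> real"
  assumes "h summable_on A" "\<And>y. y \<in> A \<Longrightarrow> h y \<ge> 0" "y \<in> A"
  shows "h y \<le> infsum h A"
  using finite_sum_le_infsum[of h A "{y}"] assms by simp

lemma pos_part_null:
  fixes f :: "'s \<Rightarrow> real"
  assumes irr: "irreducible_chain S Q"
    and f: "(\<lambda>x. norm (f x)) summable_on S"
    and inv: "\<And>x. x \<in> S \<Longrightarrow> out_rate S Q x * f x = (\<Sum>\<^sub>\<infinity>y\<in>S - {x}. Q y x * f y)"
    and x0: "x0 \<in> S" "f x0 = 0"
  shows "\<forall>x\<in>S. f x \<le> 0"
proof -
  define h where "h x = max (f x) 0" for x
  have hn: "(\<lambda>x. norm (h x)) summable_on S"
    using f by (rule summable_on_comparison_test) (auto simp: h_def)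
  have hs: "(\<lambda>y. Q y x * h y) summable_on (S - {x})" if "x \<in> S" for x
    using inflow_summable[OF hn that] by simp
  have fs: "(\<lambda>y. Q y x * f y) summable_on (S - {x})" if "x \<in> S" for x
    using inflow_summable[OF f that] by simp
  have hQnn: "Q y x * h y \<ge> 0" if "x \<in> S" "y \<in> S - {x}" for x y
    using Qnn[of y x] that by (auto simp: h_def)
  have sup: "out_rate S Q x * h x \<le> (\<Sum>\<^sub>\<infinity>y\<in>S - {x}. Q y x * h y)" if x: "x \<in> S" for x
  proof (cases "f x \<le> 0")
    case True
    hence "out_rate S Q x * h x = 0" by (simp add: h_def)
    also have "0 \<le> (\<Sum>\<^sub>\<infinity>y\<in>S - {x}. Q y x * h y)" by (rule infsum_nonneg) (use hQnn x in auto)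
    finally show ?thesis .
  next
    case False
    hence "out_rate S Q x * h x = out_rate S Q x * f x" by (simp add: h_def)
    also have "\<dots> = (\<Sum>\<^sub>\<infinity>y\<in>S - {x}. Q y x * f y)" using inv x by simp
    also have "\<dots> \<le> (\<Sum>\<^sub>\<infinity>y\<in>S - {x}. Q y x * h y)"
      by (rule infsum_mono[OF fs[OF x] hs[OF x]]) (use Qnn x in \<open>auto simp: h_def intro: mult_left_mono\<close>)
    finally show ?thesis .
  qed
  have c1: "(\<lambda>x. out_rate S Q x * h x) summable_on S"
    using conservation(1)[OF hn] by simp
  have c2: "(\<lambda>x. \<Sum>\<^sub>\<infinity>y\<in>S - {x}. Q y x * h y) summable_on S"
    using conservation(2)[OF hn] by simp
  have c3: "(\<Sum>\<^sub>\<infinity>x\<in>S. out_rate S Q x * h x) = (\<Sum>\<^sub>\<infinity>x\<in>S. \<Sum>\<^sub>\<infinity>y\<in>S - {x}. Q y x * h y)"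
    using conservation(3)[OF hn] by simp
  have hinv: "out_rate S Q x * h x = (\<Sum>\<^sub>\<infinity>y\<in>S - {x}. Q y x * h y)" if x: "x \<in> S" for x
  proof -
    define dd where "dd z = (\<Sum>\<^sub>\<infinity>y\<in>S - {z}. Q y z * h y) - out_rate S Q z * h z" for z
    have "infsum dd S = 0" unfolding dd_def using c1 c2 c3 by (subst infsum_diff') auto
    moreover have "dd summable_on S" unfolding dd_def by (rule summable_on_diff'[OF c2 c1])
    ultimately have "dd x = 0"
      by (intro nonneg_infsum_le_0D[of dd S x]) (use sup x in \<open>auto simp: dd_def\<close>)
    thus ?thesis by (simp add: dd_def)
  qed
  have prp: "h v > 0" if "h u > 0" "u \<in> S" "v \<in> S" "u \<noteq> v" "Q u v > 0" for u v
  proof -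
    have "0 < Q u v * h u" using that by simp
    also have "\<dots> \<le> (\<Sum>\<^sub>\<infinity>y\<in>S - {v}. Q y v * h y)"
      by (rule single_le_infsum) (use hs hQnn that in auto)
    also have "\<dots> = out_rate S Q v * h v" using hinv that by simp
    finally have "0 < out_rate S Q v * h v" .
    thus ?thesis using out_nonneg[OF \<open>v \<in> S\<close>] by (simp add: h_def zero_less_mult_iff)
  qed
  show ?thesis
  proof (rule ballI, rule ccontr)
    fix y assume y: "y \<in> S" and "\<not> f y \<le> 0"
    hence hy: "h y > 0" by (simp add: h_def)
    have path: "(\<lambda>u v. u \<in> S \<and> v \<in> S \<and> u \<noteq> v \<and> Q u v > 0)\<^sup>*\<^sup>* y x0"
      using irr y x0 unfolding irreducible_chain_def by blast
    have "h x0 > 0" using path hy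
    proof (induction rule: rtranclp_induct)
      case base thus ?case .
    next
      case (step u v) thus ?case using prp by blast
    qed
    thus False using x0 by (simp add: h_def)
  qed
qed

lemma unique_real:
  fixes p r :: "'s \<Rightarrow> real"
  assumes irr: "irreducible_chain S Q"
    and pnn: "\<And>x. x \<in> S \<Longrightarrow> p x \<ge> 0" and p1: "(p has_sum 1) S"
    and pinv: "\<And>x. x \<in> S \<Longrightarrow> p x * out_rate S Q x = (\<Sum>\<^sub>\<infinity>y\<in>S - {x}. p y * Q y x)"
    and r: "(\<lambda>x. norm (r x)) summable_on S"
    and rinv: "\<And>x. x \<in> S \<Longrightarrow> out_rate S Q x * r x = (\<Sum>\<^sub>\<infinity>y\<in>S - {x}. Q y x * r y)"
  shows "\<forall>x\<in>S. r x = infsum r S * p x"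
proof -
  obtain x0 where x0: "x0 \<in> S" "p x0 > 0"
  proof (rule ccontr)
    assume "\<not> thesis"
    hence "\<forall>x\<in>S. p x = 0" using pnn that by force
    hence "(p has_sum 0) S" by (simp add: has_sum_0)
    thus False using p1 has_sum_unique by fastforce
  qed
  have pn: "(\<lambda>x. norm (p x)) summable_on S"
    using p1 pnn summable_on_cong[of S "\<lambda>x. norm (p x)" p] has_sum_imp_summable by fastforce
  define t where "t = r x0 / p x0"
  define s where "s x = r x - t * p x" for x
  have sn: "(\<lambda>x. norm (s x)) summable_on S"
  proof -
    have "(\<lambda>x. norm (r x) + \<bar>t\<bar> * norm (p x)) summable_on S"
      by (intro summable_on_add r summable_on_cmult_right pn)
    thus ?thesis by (rule summable_on_comparison_test) (auto simp: s_def abs_mult intro: order.trans[OF abs_triangle_ineq4])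
  qed
  have sinv: "out_rate S Q x * s x = (\<Sum>\<^sub>\<infinity>y\<in>S - {x}. Q y x * s y)" if x: "x \<in> S" for x
  proof -
    have rs: "(\<lambda>y. Q y x * r y) summable_on (S - {x})" using inflow_summable[OF r x] by simp
    have ps: "(\<lambda>y. Q y x * (t * p y)) summable_on (S - {x})"
      using inflow_summable[OF pn x] by (simp add: summable_on_cmult_right mult.left_commute)
    have "(\<Sum>\<^sub>\<infinity>y\<in>S - {x}. Q y x * s y) = (\<Sum>\<^sub>\<infinity>y\<in>S - {x}. Q y x * r y - Q y x * (t * p y))"
      by (simp add: s_def right_diff_distrib)
    also have "\<dots> = (\<Sum>\<^sub>\<infinity>y\<in>S - {x}. Q y x * r y) - (\<Sum>\<^sub>\<infinity>y\<in>S - {x}. Q y x * (t * p y))"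
      by (rule infsum_diff'[OF rs ps])
    also have "(\<Sum>\<^sub>\<infinity>y\<in>S - {x}. Q y x * (t * p y)) = t * (\<Sum>\<^sub>\<infinity>y\<in>S - {x}. p y * Q y x)"
      by (subst infsum_cmult_right'[symmetric]) (simp add: mult_ac)
    finally show ?thesis using rinv[OF x] pinv[OF x] by (simp add: s_def algebra_simps)
  qed
  have s0: "s x0 = 0" using x0 by (simp add: s_def t_def)
  have le: "\<forall>x\<in>S. s x \<le> 0" by (rule pos_part_null[OF irr sn sinv x0(1) s0])
  have ms: "(\<lambda>x. norm (- s x)) summable_on S" using sn by simp
  have msinv: "out_rate S Q x * (- s x) = (\<Sum>\<^sub>\<infinity>y\<in>S - {x}. Q y x * (- s y))" if "x \<in> S" for x
    using sinv[OF that] by (simp add: infsum_uminus)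
  have ms0: "(\<lambda>x. - s x) x0 = 0" using s0 by simp
  have ge: "\<forall>x\<in>S. - s x \<le> 0" using pos_part_null[OF irr ms msinv x0(1) ms0] by simp
  have rt: "\<forall>x\<in>S. r x = t * p x" using le ge by (force simp: s_def)
  have "infsum r S = infsum (\<lambda>x. t * p x) S" using rt by (intro infsum_cong) auto
  also have "\<dots> = t" using infsumI[OF p1] by (simp add: infsum_cmult_right')
  finally show ?thesis using rt by simp
qed

lemma unique_complex:
  fixes p :: "'s \<Rightarrow> real" and r :: "'s \<Rightarrow> complex"
  assumes irr: "irreducible_chain S Q"
    and pnn: "\<And>x. x \<in> S \<Longrightarrow> p x \<ge> 0" and p1: "(p has_sum 1) S"
    and pinv: "\<And>x. x \<in> S \<Longrightarrow> p x * out_rate S Q x = (\<Sum>\<^sub>\<infinity>y\<in>S - {x}. p y * Q y x)"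
    and r: "(\<lambda>x. norm (r x)) summable_on S"
    and rinv: "\<And>x. x \<in> S \<Longrightarrow> r x * complex_of_real (out_rate S Q x) = (\<Sum>\<^sub>\<infinity>y\<in>S - {x}. r y * complex_of_real (Q y x))"
  shows "\<forall>x\<in>S. r x = infsum r S * complex_of_real (p x)"
proof -
  have rs: "(\<lambda>y. r y * complex_of_real (Q y x)) summable_on (S - {x})" if "x \<in> S" for x
    using inflow_summable[OF r that] by (simp add: scaleR_conv_of_real mult.commute)
  have rsum: "r summable_on S" using r abs_summable_summable by blast
  have reN: "(\<lambda>x. norm (Re (r x))) summable_on S"
    using r by (rule summable_on_comparison_test) (auto simp: abs_Re_le_cmod)
  have imN: "(\<lambda>x. norm (Im (r x))) summable_on S"
    using r by (rule summable_on_comparison_test) (auto simp: abs_Im_le_cmod)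
  have reinv: "out_rate S Q x * Re (r x) = (\<Sum>\<^sub>\<infinity>y\<in>S - {x}. Q y x * Re (r y))" if x: "x \<in> S" for x
  proof -
    have "out_rate S Q x * Re (r x) = Re (r x * complex_of_real (out_rate S Q x))" by simp
    also have "\<dots> = (\<Sum>\<^sub>\<infinity>y\<in>S - {x}. Re (r y * complex_of_real (Q y x)))"
      using rinv[OF x] infsum_Re[OF rs[OF x]] by simp
    finally show ?thesis by (simp add: mult.commute)
  qed
  have iminv: "out_rate S Q x * Im (r x) = (\<Sum>\<^sub>\<infinity>y\<in>S - {x}. Q y x * Im (r y))" if x: "x \<in> S" for x
  proof -
    have "out_rate S Q x * Im (r x) = Im (r x * complex_of_real (out_rate S Q x))" by simp
    also have "\<dots> = (\<Sum>\<^sub>\<infinity>y\<in>S - {x}. Im (r y * complex_of_real (Q y x)))"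
      using rinv[OF x] infsum_Im[OF rs[OF x]] by simp
    finally show ?thesis by (simp add: mult.commute)
  qed
  have R: "\<forall>x\<in>S. Re (r x) = infsum (\<lambda>x. Re (r x)) S * p x"
    by (rule unique_real[OF irr pnn p1 pinv reN reinv]) auto
  have I: "\<forall>x\<in>S. Im (r x) = infsum (\<lambda>x. Im (r x)) S * p x"
    by (rule unique_real[OF irr pnn p1 pinv imN iminv]) auto
  show ?thesis
  proof
    fix x assume x: "x \<in> S"
    show "r x = infsum r S * complex_of_real (p x)"
      using R[rule_format, OF x] I[rule_format, OF x] infsum_Re[OF rsum] infsum_Im[OF rsum]
      by (simp add: complex_eq_iff)
  qed
qed

end



lemma has_sum_finsum:
  fixes f :: "'i \<Rightarrow> 'a \<Rightarrow> 'b::topological_comm_monoid_add"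
  assumes "finite I" "\<And>i. i \<in> I \<Longrightarrow> (f i has_sum s i) A"
  shows "((\<lambda>x. \<Sum>i\<in>I. f i x) has_sum (\<Sum>i\<in>I. s i)) A"
  using assms
proof (induction I rule: finite_induct)
  case empty thus ?case by simp
next
  case (insert j I)
  have "((\<lambda>x. f j x + (\<Sum>i\<in>I. f i x)) has_sum (s j + (\<Sum>i\<in>I. s i))) A"
    using insert by (intro has_sum_add) auto
  thus ?case using insert by simp
qed

lemma has_sum_remove:
  fixes f :: "'a \<Rightarrow> 'b::topological_ab_group_add"
  assumes "(f has_sum X) A" "x \<in> A"
  shows "(f has_sum (X - f x)) (A - {x})"
proof -
  have "((\<lambda>y. if y = x then f x else 0) has_sum f x) A"
    using assms(2) by (intro has_sum_finiteI[THEN has_sum_cong_neutral[THEN iffD1, rotated -1], of "{x}"]) auto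
  from has_sum_diff'[OF assms(1) this]
  have "((\<lambda>y. f y - (if y = x then f x else 0)) has_sum (X - f x)) A" .
  thus ?thesis by (rule has_sum_cong_neutral[THEN iffD1, rotated -1]) auto
qed

lemma has_sum_split_int:
  fixes g :: "int \<Rightarrow> real"
  assumes "g summable_on {..K}" "L \<le> K"
  shows "(g has_sum (infsum g {..L - 1} + sum g {L..K})) {..K}"
proof -
  have s: "g summable_on {..L - 1}" by (rule summable_on_subset[OF assms(1)]) (use assms in auto)
  have "(g has_sum (infsum g {..L - 1} + sum g {L..K})) ({..L - 1} \<union> {L..K})"
    by (intro has_sum_Un_disjoint has_sum_infsum s has_sum_finiteI) auto
  moreover have "{..L - 1} \<union> {L..K} = {..K}" using assms by auto
  ultimately show ?thesis by simp
qed

definition gt :: "(int \<Rightarrow> nat \<Rightarrow> real) \<Rightarrow> (int \<Rightarrow> nat \<Rightarrow> real) \<Rightarrow> (int \<Rightarrow> nat \<Rightarrow> real)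
   \<Rightarrow> (int \<Rightarrow> nat \<Rightarrow> real) \<Rightarrow> nat \<Rightarrow> nat set \<Rightarrow> int \<Rightarrow> real" where
  "gt a b cc d i A k = (if i \<in> A then cc k i + d k i else a k i + b k i)"

lemma L1:
  assumes A: "A \<subseteq> {1..c}" and i: "i \<in> {1..c}" and K: "K \<ge> 0"
  shows "((\<lambda>w'. jump_rate K a b cc d i (n0,A) w') has_sum (\<Sum>k\<in>{-int n0..K}. gt a b cc d i A k)) (Wset c)"
proof -
  define h where "h = (\<lambda>(m::nat,fl::bool). (m, if fl then insert i A else A - {i}))"
  define N where "N = nat (int n0 + K)"
  define T where "T = h ` ({..N} \<times> UNIV)"
  have injh: "inj_on h ({..N} \<times> UNIV)" unfolding h_def inj_on_def by auto
  have TW: "T \<subseteq> Wset c" using A i unfolding T_def h_def Wset_def by (auto split: if_splits)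
  have zero: "jump_rate K a b cc d i (n0,A) w' = 0" if "w' \<in> Wset c - T" for w'
  proof -
    obtain m B where w': "w' = (m,B)" by fastforce
    show ?thesis
    proof (cases "A - {i} = B - {i} \<and> int m - int n0 \<le> K")
      case True
      hence "B = insert i A \<or> B = A - {i}" by blast
      have "m > N"
      proof (rule ccontr)
        assume "\<not> m > N"
        hence "(m, B \<in> ({insert i A} :: nat set set)) \<in> {..N} \<times> UNIV" by simp
        moreover have "h (m, B \<in> ({insert i A} :: nat set set)) = (m,B)"
          using \<open>B = insert i A \<or> B = A - {i}\<close> unfolding h_def by auto
        ultimately have "(m,B) \<in> T" unfolding T_def by (metis image_eqI)
        thus False using that w' by simp
      qed
      hence "\<not> int m - int n0 \<le> K" unfolding N_def by linarith
      thus ?thesis unfolding jump_rate_def w' Let_def by simp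
    next
      case False thus ?thesis unfolding jump_rate_def w' Let_def by auto
    qed
  qed
  have "((\<lambda>w'. jump_rate K a b cc d i (n0,A) w') has_sum (sum (\<lambda>w'. jump_rate K a b cc d i (n0,A) w') T)) T"
    by (rule has_sum_finiteI) (auto simp: T_def)
  hence hsT: "((\<lambda>w'. jump_rate K a b cc d i (n0,A) w') has_sum (sum (\<lambda>w'. jump_rate K a b cc d i (n0,A) w') T)) (Wset c)"
    by (rule has_sum_cong_neutral[THEN iffD1, rotated -1]) (use TW zero in auto)
  have "sum (\<lambda>w'. jump_rate K a b cc d i (n0,A) w') T
      = (\<Sum>z\<in>{..N} \<times> UNIV. jump_rate K a b cc d i (n0,A) (h z))"
    unfolding T_def by (rule sum.reindex[OF injh, unfolded comp_def])
  also have "\<dots> = (\<Sum>m\<in>{..N}. \<Sum>fl\<in>UNIV. jump_rate K a b cc d i (n0,A) (h (m,fl)))"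
    by (simp add: sum.cartesian_product)
  also have "\<dots> = (\<Sum>m\<in>{..N}. gt a b cc d i A (int m - int n0))"
  proof (rule sum.cong[OF refl])
    fix m assume m: "m \<in> {..N}"
    hence k: "int m - int n0 \<le> K" unfolding N_def using K by auto
    have u: "(UNIV :: bool set) = {True, False}" by auto
    show "(\<Sum>fl\<in>UNIV. jump_rate K a b cc d i (n0,A) (h (m,fl))) = gt a b cc d i A (int m - int n0)"
      unfolding u using k by (auto simp: h_def jump_rate_def Let_def gt_def insert_Diff_if)
  qed
  also have "\<dots> = (\<Sum>k\<in>{-int n0..K}. gt a b cc d i A k)"
  proof (rule sum.reindex_bij_witness[of _ "\<lambda>k. nat (k + int n0)" "\<lambda>m. int m - int n0"])
  qed (use K in \<open>auto simp: N_def\<close>)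
  finally show ?thesis using hsT by simp
qed

lemma bounded_coef_summable:
  fixes q :: "'x \<Rightarrow> complex" and co :: "int \<Rightarrow> real"
  assumes co: "co summable_on I" "\<And>k. k \<in> I \<Longrightarrow> co k \<ge> 0"
    and qb: "\<And>k. k \<in> I \<Longrightarrow> norm (q (f k)) \<le> C"
  shows "(\<lambda>k. complex_of_real (co k) * q (f k)) summable_on I"
proof -
  have "(\<lambda>k. C * co k) summable_on I" using co(1) by (rule summable_on_cmult_right)
  hence "(\<lambda>k. norm (complex_of_real (co k) * q (f k))) summable_on I"
  proof (rule summable_on_comparison_test)
    fix k assume "k \<in> I"
    thus "norm (complex_of_real (co k) * q (f k)) \<le> C * co k"
      using co(2)[of k] qb[of k] mult_left_mono[of "norm (q (f k))" C "co k"] by (simp add: norm_mult mult.commute)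
  qed simp
  thus ?thesis by (rule abs_summable_summable)
qed

lemma L2:
  fixes q :: "wstate \<Rightarrow> complex"
  assumes A: "A \<subseteq> {1..c}" and i: "i \<in> {1..c}" and n0: "int n0 \<ge> K"
    and qb: "\<And>w. w \<in> Wset c \<Longrightarrow> norm (q w) \<le> C"
    and rs: "(\<lambda>k. a k i) summable_on {..K}" "(\<lambda>k. b k i) summable_on {..K}"
      "(\<lambda>k. cc k i) summable_on {..K}" "(\<lambda>k. d k i) summable_on {..K}"
    and rn: "\<And>k. k \<le> K \<Longrightarrow> a k i \<ge> 0 \<and> b k i \<ge> 0 \<and> cc k i \<ge> 0 \<and> d k i \<ge> 0"
  shows "((\<lambda>w'. q w' * complex_of_real (jump_rate K a b cc d i w' (n0,A))) has_sum
     (\<Sum>\<^sub>\<infinity>k\<in>{..K}.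
          (if i \<notin> A then
             complex_of_real (b k i) * q (nat (int n0 - k), A)
             + complex_of_real (d k i) * q (nat (int n0 - k), insert i A)
           else
             complex_of_real (a k i) * q (nat (int n0 - k), A - {i})
             + complex_of_real (cc k i) * q (nat (int n0 - k), A)))) (Wset c)"
proof -
  define coT where "coT k = (if i \<in> A then cc k i else d k i)" for k
  define coF where "coF k = (if i \<in> A then a k i else b k i)" for k
  define fT where "fT k = complex_of_real (coT k) * q (nat (int n0 - k), insert i A)" for k
  define fF where "fF k = complex_of_real (coF k) * q (nat (int n0 - k), A - {i})" for k
  have sT: "fT summable_on {..K}" unfolding fT_def
    by (rule bounded_coef_summable[where C=C]) (use rs rn in \<open>cases "i \<in> A"; auto simp: coT_def\<close>, use rn in \<open>auto simp: coT_def\<close>, use A i in \<open>auto intro!: qb simp: Wset_def\<close>)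
  have sF: "fF summable_on {..K}" unfolding fF_def
    by (rule bounded_coef_summable[where C=C]) (use rs rn in \<open>cases "i \<in> A"; auto simp: coF_def\<close>, use rn in \<open>auto simp: coF_def\<close>, use A in \<open>auto intro!: qb simp: Wset_def\<close>)
  define XT where "XT = infsum fT {..K}"
  define XF where "XF = infsum fF {..K}"
  have rhs: "(\<lambda>k. (if i \<notin> A then
             complex_of_real (b k i) * q (nat (int n0 - k), A)
             + complex_of_real (d k i) * q (nat (int n0 - k), insert i A)
           else
             complex_of_real (a k i) * q (nat (int n0 - k), A - {i})
             + complex_of_real (cc k i) * q (nat (int n0 - k), A))) = (\<lambda>k. fF k + fT k)"
    by (rule ext) (auto simp: fT_def fF_def coT_def coF_def insert_absorb)
  have hrhs: "((\<lambda>k. fF k + fT k) has_sum (XF + XT)) {..K}"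
    unfolding XT_def XF_def by (intro has_sum_add has_sum_infsum sT sF)
  define phT where "phT k = (nat (int n0 - k), insert i A)" for k :: int
  define phF where "phF k = (nat (int n0 - k), A - {i})" for k :: int
  define L where "L w' = q w' * complex_of_real (jump_rate K a b cc d i w' (n0,A))" for w'
  have injT: "inj_on phT {..K}" unfolding phT_def inj_on_def using n0 by auto
  have injF: "inj_on phF {..K}" unfolding phF_def inj_on_def using n0 by auto
  have jrT: "jump_rate K a b cc d i (phT k) (n0,A) = coT k" if "k \<in> {..K}" for k
  proof -
    have e: "int n0 - int (nat (int n0 - k)) = k" using that n0 by auto
    show ?thesis using that unfolding phT_def jump_rate_def Let_def fst_conv snd_conv e
      by (auto simp: coT_def)
  qed
  have jrF: "jump_rate K a b cc d i (phF k) (n0,A) = coF k" if "k \<in> {..K}" for k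
  proof -
    have e: "int n0 - int (nat (int n0 - k)) = k" using that n0 by auto
    show ?thesis using that unfolding phF_def jump_rate_def Let_def fst_conv snd_conv e
      by (auto simp: coF_def)
  qed
  have hT: "(L has_sum XT) (phT ` {..K})"
  proof -
    have "((L \<circ> phT) has_sum XT) {..K}"
      using has_sum_infsum[OF sT] unfolding XT_def
      by (rule has_sum_cong[THEN iffD1, rotated]) (simp add: L_def fT_def phT_def jrT[unfolded phT_def])
    thus ?thesis by (subst has_sum_reindex[OF injT])
  qed
  have hF: "(L has_sum XF) (phF ` {..K})"
  proof -
    have "((L \<circ> phF) has_sum XF) {..K}"
      using has_sum_infsum[OF sF] unfolding XF_def
      by (rule has_sum_cong[THEN iffD1, rotated]) (simp add: L_def fF_def phF_def jrF[unfolded phF_def])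
    thus ?thesis by (subst has_sum_reindex[OF injF])
  qed
  have disj: "phT ` {..K} \<inter> phF ` {..K} = {}" unfolding phT_def phF_def by auto
  have hU: "(L has_sum (XT + XF)) (phT ` {..K} \<union> phF ` {..K})"
    by (rule has_sum_Un_disjoint[OF hT hF disj])
  have sub: "phT ` {..K} \<union> phF ` {..K} \<subseteq> Wset c"
    using A i unfolding phT_def phF_def Wset_def by auto
  have zero: "L w' = 0" if "w' \<in> Wset c - (phT ` {..K} \<union> phF ` {..K})" for w'
  proof -
    obtain m B where w': "w' = (m,B)" by fastforce
    show ?thesis
    proof (cases "B - {i} = A - {i} \<and> int n0 - int m \<le> K")
      case True
      hence B: "B = insert i A \<or> B = A - {i}" by blast
      define k where "k = int n0 - int m"
      have k: "k \<in> {..K}" and m: "m = nat (int n0 - k)" using True by (auto simp: k_def)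
      have "w' \<in> phT ` {..K} \<union> phF ` {..K}"
        using B k m unfolding w' phT_def phF_def by blast
      thus ?thesis using that by simp
    next
      case False thus ?thesis unfolding L_def jump_rate_def w' Let_def by auto
    qed
  qed
  have "(L has_sum (XT + XF)) (Wset c)"
    using hU by (rule has_sum_cong_neutral[THEN iffD1, rotated -1]) (use sub zero in auto)
  moreover have "(\<Sum>\<^sub>\<infinity>k\<in>{..K}. fF k + fT k) = XT + XF"
    using infsumI[OF hrhs] by (simp add: add.commute)
  ultimately show ?thesis unfolding rhs L_def by simp
qed


locale setting =
  fixes V :: "'v set" and c :: nat and K :: int
    and a b cc d :: "int \<Rightarrow> nat \<Rightarrow> real"
    and Q :: "'v + wstate \<Rightarrow> 'v + wstate \<Rightarrow> real"
  assumes V_fin: "finite V" and K_pos: "K \<ge> 1"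
    and rates_nonneg: "\<And>k i. i \<in> {1..c} \<Longrightarrow> k \<le> K \<Longrightarrow>
           a k i \<ge> 0 \<and> b k i \<ge> 0 \<and> cc k i \<ge> 0 \<and> d k i \<ge> 0"
    and rates_finite: "\<And>i. i \<in> {1..c} \<Longrightarrow>
           (\<lambda>k. a k i) summable_on {..K} \<and> (\<lambda>k. b k i) summable_on {..K} \<and>
           (\<lambda>k. cc k i) summable_on {..K} \<and> (\<lambda>k. d k i) summable_on {..K}"
    and Q_WW: "\<And>w w'. w \<in> Wset c \<Longrightarrow> w' \<in> Wset c \<Longrightarrow> w \<noteq> w' \<Longrightarrow>
           Q (Inr w) (Inr w') = wrate c K a b cc d w w'"
    and Q_WV: "\<And>w. w \<in> Wset c \<Longrightarrow>
           (\<Sum>v\<in>V. Q (Inr w) (Inl v)) = to_V_rate c a b cc d w"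
    and Q_VW: "\<And>v w. v \<in> V \<Longrightarrow> w \<in> Wset c \<Longrightarrow> int (fst w) \<ge> K \<Longrightarrow> Q (Inl v) (Inr w) = 0"
begin

abbreviation "jr \<equiv> jump_rate K a b cc d"
abbreviation "S \<equiv> states V c"

lemma gt_summable: "i \<in> {1..c} \<Longrightarrow> gt a b cc d i A summable_on {..K}"
  using rates_finite[of i] unfolding gt_def by (cases "i \<in> A") (auto intro: summable_on_add)

lemma gt_nonneg: "i \<in> {1..c} \<Longrightarrow> k \<le> K \<Longrightarrow> gt a b cc d i A k \<ge> 0"
  using rates_nonneg[of i k] unfolding gt_def by auto

lemma jr_diag_nonneg: "i \<in> {1..c} \<Longrightarrow> jr i w w \<ge> 0"
  using rates_nonneg[of i 0] K_pos unfolding jump_rate_def Let_def by auto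

lemma S_minus: "S - {Inr w} = Inl ` V \<union> Inr ` (Wset c - {w})"
  unfolding states_def by auto

lemma OUT:
  assumes w: "w \<in> Wset c"
  shows "(Q (Inr w) has_sum ((\<Sum>i\<in>{1..c}. infsum (gt a b cc d i (snd w)) {..K}) - (\<Sum>i\<in>{1..c}. jr i w w))) (S - {Inr w})"
proof -
  obtain n0 A where wA: "w = (n0, A)" by fastforce
  have A: "A \<subseteq> {1..c}" using w wA by (simp add: Wset_def)
  have hV: "(Q (Inr w) has_sum to_V_rate c a b cc d w) (Inl ` V)"
  proof -
    have "((Q (Inr w) \<circ> Inl) has_sum to_V_rate c a b cc d w) V"
      using Q_WV[OF w] V_fin by (intro has_sum_finiteI) auto
    thus ?thesis by (subst has_sum_reindex) (auto simp: inj_on_def)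
  qed
  have hW0: "((\<lambda>w'. \<Sum>i\<in>{1..c}. jr i w w') has_sum (\<Sum>i\<in>{1..c}. \<Sum>k\<in>{-int n0..K}. gt a b cc d i A k)) (Wset c)"
    unfolding wA by (rule has_sum_finsum) (use L1[OF A] K_pos in auto)
  have hW1: "((\<lambda>w'. \<Sum>i\<in>{1..c}. jr i w w') has_sum ((\<Sum>i\<in>{1..c}. \<Sum>k\<in>{-int n0..K}. gt a b cc d i A k) - (\<Sum>i\<in>{1..c}. jr i w w))) (Wset c - {w})"
    using has_sum_remove[OF hW0 w] by simp
  have hW: "(Q (Inr w) has_sum ((\<Sum>i\<in>{1..c}. \<Sum>k\<in>{-int n0..K}. gt a b cc d i A k) - (\<Sum>i\<in>{1..c}. jr i w w))) (Inr ` (Wset c - {w}))"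
  proof (subst has_sum_reindex)
    show "inj_on Inr (Wset c - {w})" by (auto simp: inj_on_def)
    show "((Q (Inr w) \<circ> Inr) has_sum ((\<Sum>i\<in>{1..c}. \<Sum>k\<in>{-int n0..K}. gt a b cc d i A k) - (\<Sum>i\<in>{1..c}. jr i w w))) (Wset c - {w})"
      using hW1 by (rule has_sum_cong[THEN iffD1, rotated]) (use w Q_WW[of w] in \<open>auto simp: wrate_def\<close>)
  qed
  have hAll: "(Q (Inr w) has_sum (to_V_rate c a b cc d w + ((\<Sum>i\<in>{1..c}. \<Sum>k\<in>{-int n0..K}. gt a b cc d i A k) - (\<Sum>i\<in>{1..c}. jr i w w)))) (S - {Inr w})"
    unfolding S_minus by (rule has_sum_Un_disjoint[OF hV hW]) auto
  have tv: "to_V_rate c a b cc d w = (\<Sum>i\<in>{1..c}. infsum (gt a b cc d i A) {..- int n0 - 1})"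
    unfolding to_V_rate_def wA gt_def by simp
  have split: "infsum (gt a b cc d i A) {..K} = infsum (gt a b cc d i A) {..- int n0 - 1} + (\<Sum>k\<in>{-int n0..K}. gt a b cc d i A k)"
    if "i \<in> {1..c}" for i
    using has_sum_split_int[OF gt_summable[OF that], of "- int n0" A] K_pos infsumI by fastforce
  have "to_V_rate c a b cc d w + ((\<Sum>i\<in>{1..c}. \<Sum>k\<in>{-int n0..K}. gt a b cc d i A k) - (\<Sum>i\<in>{1..c}. jr i w w))
     = (\<Sum>i\<in>{1..c}. infsum (gt a b cc d i (snd w)) {..K}) - (\<Sum>i\<in>{1..c}. jr i w w)"
    unfolding tv using split by (simp add: wA sum.distrib)
  thus ?thesis using hAll by (simp add: algebra_simps)
qed

lemma out_W: "w \<in> Wset c \<Longrightarrow> out_rate S Q (Inr w) =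
    (\<Sum>i\<in>{1..c}. infsum (gt a b cc d i (snd w)) {..K}) - (\<Sum>i\<in>{1..c}. jr i w w)"
  unfolding out_rate_def using OUT infsumI by blast


lemma BW:
  fixes q :: "wstate \<Rightarrow> complex"
  assumes w: "w \<in> Wset c" and n0: "int (fst w) \<ge> K"
    and qb: "\<And>w. w \<in> Wset c \<Longrightarrow> norm (q w) \<le> C"
    and inner: "inner_eqs c K a b cc d q"
  shows "((\<lambda>w'. q w' * complex_of_real (Q (Inr w') (Inr w))) has_sum
            (q w * complex_of_real (out_rate S Q (Inr w)))) (Wset c - {w})"
proof -
  obtain n0 A where wA: "w = (n0, A)" by fastforce
  have A: "A \<subseteq> {1..c}" using w wA by (simp add: Wset_def)
  have n0': "int n0 \<ge> K" using n0 wA by simp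
  define R where "R i = (\<Sum>\<^sub>\<infinity>k\<in>{..K}.
          (if i \<notin> A then
             complex_of_real (b k i) * q (nat (int n0 - k), A)
             + complex_of_real (d k i) * q (nat (int n0 - k), insert i A)
           else
             complex_of_real (a k i) * q (nat (int n0 - k), A - {i})
             + complex_of_real (cc k i) * q (nat (int n0 - k), A)))" for i
  have hi: "((\<lambda>w'. q w' * complex_of_real (jr i w' (n0,A))) has_sum R i) (Wset c)" if i: "i \<in> {1..c}" for i
    unfolding R_def
    by (rule L2[OF A i n0' qb]) (use rates_finite[OF i] rates_nonneg[OF i] in auto)
  have hs: "((\<lambda>w'. \<Sum>i\<in>{1..c}. q w' * complex_of_real (jr i w' (n0,A))) has_sum (\<Sum>i\<in>{1..c}. R i)) (Wset c)"
    by (rule has_sum_finsum) (use hi in auto)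
  have ie: "(\<Sum>i\<in>{1..c}. \<Sum>\<^sub>\<infinity>k\<in>{..K}.
          complex_of_real (if i \<in> A then cc k i + d k i else a k i + b k i)) * q (n0, A) = (\<Sum>i\<in>{1..c}. R i)"
    using inner w n0' unfolding inner_eqs_def R_def wA by blast
  have ofr: "(\<Sum>\<^sub>\<infinity>k\<in>{..K}. complex_of_real (if i \<in> A then cc k i + d k i else a k i + b k i))
      = complex_of_real (infsum (gt a b cc d i A) {..K})" if i: "i \<in> {1..c}" for i
  proof -
    have "((\<lambda>k. complex_of_real (gt a b cc d i A k)) has_sum complex_of_real (infsum (gt a b cc d i A) {..K})) {..K}"
      by (rule has_sum_of_real[OF has_sum_infsum[OF gt_summable[OF i]]])
    thus ?thesis unfolding gt_def using infsumI by blast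
  qed
  have ie2: "(\<Sum>i\<in>{1..c}. R i) = complex_of_real (\<Sum>i\<in>{1..c}. infsum (gt a b cc d i A) {..K}) * q w"
    using ie ofr wA by simp
  have hr: "((\<lambda>w'. \<Sum>i\<in>{1..c}. q w' * complex_of_real (jr i w' (n0,A))) has_sum
      ((\<Sum>i\<in>{1..c}. R i) - (\<Sum>i\<in>{1..c}. q w * complex_of_real (jr i w w)))) (Wset c - {w})"
    using has_sum_remove[OF hs w] wA by simp
  have eqv: "(\<Sum>i\<in>{1..c}. R i) - (\<Sum>i\<in>{1..c}. q w * complex_of_real (jr i w w))
      = q w * complex_of_real (out_rate S Q (Inr w))"
    unfolding ie2 out_W[OF w] using wA by (simp add: sum_distrib_left algebra_simps)
  show ?thesis
    using hr unfolding eqv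
    by (rule has_sum_cong[THEN iffD1, rotated])
       (use w Q_WW wA in \<open>auto simp: wrate_def sum_distrib_left\<close>)
qed

lemma out_bound:
  assumes w: "w \<in> Wset c"
  shows "out_rate S Q (Inr w) \<le> (\<Sum>i\<in>{1..c}. \<Sum>\<^sub>\<infinity>k\<in>{..K}. a k i + b k i + cc k i + d k i)"
proof -
  have "out_rate S Q (Inr w) \<le> (\<Sum>i\<in>{1..c}. infsum (gt a b cc d i (snd w)) {..K})"
  proof -
    have "0 \<le> (\<Sum>i\<in>{1..c}. jr i w w)" by (rule sum_nonneg) (use jr_diag_nonneg in auto)
    thus ?thesis unfolding out_W[OF w] by simp
  qed
  also have "\<dots> \<le> (\<Sum>i\<in>{1..c}. \<Sum>\<^sub>\<infinity>k\<in>{..K}. a k i + b k i + cc k i + d k i)"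
  proof (rule sum_mono)
    fix i assume i: "i \<in> {1..c}"
    have s: "(\<lambda>k. a k i + b k i + cc k i + d k i) summable_on {..K}"
      using rates_finite[OF i] by (auto intro!: summable_on_add)
    show "infsum (gt a b cc d i (snd w)) {..K} \<le> (\<Sum>\<^sub>\<infinity>k\<in>{..K}. a k i + b k i + cc k i + d k i)"
      by (rule infsum_mono[OF gt_summable[OF i] s]) (use rates_nonneg[OF i] in \<open>auto simp: gt_def\<close>)
  qed
  finally show ?thesis .
qed

end



lemma LA_kernel:
  fixes m :: "nat \<Rightarrow> nat \<Rightarrow> complex"
  assumes n: "n > 0" and cols: "\<And>j. j < n \<Longrightarrow> (\<Sum>i<n. m i j) = 0"
  shows "\<exists>v. (\<exists>j<n. v j \<noteq> 0) \<and> (\<forall>i<n. (\<Sum>j<n. m i j * v j) = 0)"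
proof -
  define A where "A = Matrix.mat n n (\<lambda>(i,j). m i j)"
  have A: "A \<in> carrier_mat n n" unfolding A_def by simp
  have AT: "transpose_mat A \<in> carrier_mat n n" using A by simp
  define one where "one = Matrix.vec n (\<lambda>_. 1::complex)"
  have "transpose_mat A *\<^sub>v one = 0\<^sub>v n"
  proof (rule eq_vecI)
    fix i assume i: "i < dim_vec (0\<^sub>v n :: complex Matrix.vec)"
    hence i: "i < n" by simp
    have "(transpose_mat A *\<^sub>v one) $ i = (\<Sum>k<n. m k i)"
      using i A unfolding one_def A_def
      by (simp add: scalar_prod_def lessThan_atLeast0)
    thus "(transpose_mat A *\<^sub>v one) $ i = 0\<^sub>v n $ i" using cols i by simp
  qed (simp add: A_def one_def)
  moreover have "one \<noteq> 0\<^sub>v n" using n unfolding one_def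
    by (metis index_vec index_zero_vec(1) zero_neq_one)
  moreover have "one \<in> carrier_vec n" unfolding one_def by simp
  ultimately have "Determinant.det (transpose_mat A) = 0"
    using det_0_iff_vec_prod_zero_field[OF AT] by blast
  hence "Determinant.det A = 0" using det_transpose[OF A] by simp
  then obtain v where v: "v \<in> carrier_vec n" "v \<noteq> 0\<^sub>v n" "A *\<^sub>v v = 0\<^sub>v n"
    using det_0_iff_vec_prod_zero_field[OF A] by blast
  have "\<exists>j<n. v $ j \<noteq> 0"
  proof (rule ccontr)
    assume "\<not> ?thesis"
    hence "v = 0\<^sub>v n" using v(1) by (intro eq_vecI) auto
    thus False using v(2) by simp
  qed
  moreover have "\<forall>i<n. (\<Sum>j<n. m i j * v $ j) = 0"
  proof (intro allI impI)
    fix i assume i: "i < n"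
    have "(A *\<^sub>v v) $ i = (\<Sum>j<n. m i j * v $ j)"
      using i v(1) unfolding A_def by (simp add: scalar_prod_def lessThan_atLeast0)
    thus "(\<Sum>j<n. m i j * v $ j) = 0" using v(3) i by simp
  qed
  ultimately show ?thesis by blast
qed



lemma summable_on_sum_type:
  fixes f :: "'a + 'b \<Rightarrow> 'c::{topological_comm_monoid_add}"
  assumes "(\<lambda>x. f (Inl x)) summable_on A" "(\<lambda>x. f (Inr x)) summable_on B"
  shows "f summable_on (Inl ` A \<union> Inr ` B)"
proof (rule summable_on_Un_disjoint)
  show "f summable_on Inl ` A" using assms(1) by (subst summable_on_reindex) (auto simp: inj_on_def o_def)
  show "f summable_on Inr ` B" using assms(2) by (subst summable_on_reindex) (auto simp: inj_on_def o_def)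
qed auto

theorem lemma2:
  fixes V :: "'v set" and c :: nat and K :: int
    and a b cc d :: "int \<Rightarrow> nat \<Rightarrow> real"
    and Q :: "'v + wstate \<Rightarrow> 'v + wstate \<Rightarrow> real"
    and p :: "'v + wstate \<Rightarrow> real"
    and P :: "nat \<Rightarrow> wstate \<Rightarrow> complex"
  assumes V_fin: "finite V" and c_pos: "c \<ge> 1" and K_pos: "K \<ge> 1"
    and rates_nonneg: "\<And>k i. i \<in> {1..c} \<Longrightarrow> k \<le> K \<Longrightarrow>
           a k i \<ge> 0 \<and> b k i \<ge> 0 \<and> cc k i \<ge> 0 \<and> d k i \<ge> 0"
    and rates_finite: "\<And>i. i \<in> {1..c} \<Longrightarrow>
           (\<lambda>k. a k i) summable_on {..K} \<and> (\<lambda>k. b k i) summable_on {..K} \<and>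
           (\<lambda>k. cc k i) summable_on {..K} \<and> (\<lambda>k. d k i) summable_on {..K}"
    and Q_nonneg: "\<And>x y. x \<in> states V c \<Longrightarrow> y \<in> states V c \<Longrightarrow> x \<noteq> y \<Longrightarrow> Q x y \<ge> 0"
    and Q_WW: "\<And>w w'. w \<in> Wset c \<Longrightarrow> w' \<in> Wset c \<Longrightarrow> w \<noteq> w' \<Longrightarrow>
           Q (Inr w) (Inr w') = wrate c K a b cc d w w'"
    and Q_WV: "\<And>w. w \<in> Wset c \<Longrightarrow>
           (\<Sum>v\<in>V. Q (Inr w) (Inl v)) = to_V_rate c a b cc d w"
    and Q_VW: "\<And>v w. v \<in> V \<Longrightarrow> w \<in> Wset c \<Longrightarrow> int (fst w) \<ge> K \<Longrightarrow> Q (Inl v) (Inr w) = 0"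
    and Q_finite: "\<And>x. x \<in> states V c \<Longrightarrow> (Q x) summable_on (states V c - {x})"
    and irred: "irreducible_chain (states V c) Q"
    and equil: "is_equilibrium (states V c) Q p"
    and sol: "\<And>j. j < 2 ^ c * nat K \<Longrightarrow> inner_eqs c K a b cc d (P j)"
    and abs_conv: "\<And>j. j < 2 ^ c * nat K \<Longrightarrow> (\<lambda>w. norm (P j w)) summable_on Wset c"
    and lin_indep: "\<And>\<gamma>. (\<forall>w\<in>Wset c. (\<Sum>j<2 ^ c * nat K. \<gamma> j * P j w) = 0) \<Longrightarrow>
           \<forall>j<2 ^ c * nat K. \<gamma> j = 0"
  shows "\<exists>\<alpha>. (\<forall>w\<in>Wset c. complex_of_real (p (Inr w)) = (\<Sum>j<2 ^ c * nat K. \<alpha> j * P j w))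
            \<and> boundary_sys V c K Q (2 ^ c * nat K) P \<alpha> (\<lambda>v. complex_of_real (p (Inl v)))
            \<and> (\<forall>\<beta> u. boundary_sys V c K Q (2 ^ c * nat K) P \<beta> u \<longrightarrow>
                   (\<forall>j<2 ^ c * nat K. \<beta> j = \<alpha> j))"
proof -
  interpret st: setting V c K a b cc d Q
    by unfold_locales (use V_fin K_pos rates_nonneg rates_finite Q_WW Q_WV Q_VW in auto)
  define S where "S = states V c"
  define N where "N = 2 ^ c * nat K"
  define Mb where "Mb = (\<Sum>i\<in>{1..c}. \<Sum>\<^sub>\<infinity>k\<in>{..K}. a k i + b k i + cc k i + d k i)
     + (\<Sum>v\<in>V. out_rate S Q (Inl v))"
  have outnn: "out_rate S Q x \<ge> 0" if "x \<in> S" for x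
    unfolding out_rate_def by (rule infsum_nonneg) (use Q_nonneg that S_def in auto)
  have Mb: "out_rate S Q x \<le> Mb" if x: "x \<in> S" for x
  proof -
    have v0: "0 \<le> (\<Sum>v\<in>V. out_rate S Q (Inl v))"
      by (rule sum_nonneg) (use outnn in \<open>auto simp: S_def states_def\<close>)
    have r0: "0 \<le> (\<Sum>i\<in>{1..c}. \<Sum>\<^sub>\<infinity>k\<in>{..K}. a k i + b k i + cc k i + d k i)"
      by (intro sum_nonneg infsum_nonneg) (use rates_nonneg in force)
    show ?thesis
    proof (cases x)
      case (Inl v)
      hence "v \<in> V" using x by (auto simp: S_def states_def)
      hence "out_rate S Q (Inl v) \<le> (\<Sum>v\<in>V. out_rate S Q (Inl v))"
        by (rule member_le_sum[of v V "\<lambda>v. out_rate S Q (Inl v)"]) (use outnn V_fin in \<open>auto simp: S_def states_def\<close>)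
      hence "out_rate S Q x \<le> (\<Sum>v\<in>V. out_rate S Q (Inl v))" using Inl by simp
      thus ?thesis using r0 by (simp add: Mb_def)
    next
      case (Inr w)
      hence "w \<in> Wset c" using x by (auto simp: S_def states_def)
      thus ?thesis using st.out_bound[of w] Inr v0 by (simp add: Mb_def S_def)
    qed
  qed
  interpret bc: bchain S Q Mb
    by unfold_locales (use Q_nonneg Q_finite Mb in \<open>auto simp: S_def\<close>)
  have SU: "S = Inl ` V \<union> Inr ` Wset c" by (simp add: S_def states_def)
  define CP where "CP j = infsum (\<lambda>w. norm (P j w)) (Wset c)" for j
  have CP: "norm (P j w) \<le> CP j" if "j < N" "w \<in> Wset c" for j w
    unfolding CP_def using finite_sum_le_infsum[of "\<lambda>w. norm (P j w)" "Wset c" "{w}"] abs_conv[of j] that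
    by (simp add: N_def)
  have candN: "(\<lambda>x. norm (cand N P \<beta> u x)) summable_on S" for \<beta> u
  proof -
    have "((\<lambda>w. \<Sum>j<N. norm (\<beta> j) * norm (P j w)) has_sum (\<Sum>j<N. norm (\<beta> j) * CP j)) (Wset c)"
    proof (rule has_sum_finsum)
      fix j assume "j \<in> {..<N}"
      hence "(\<lambda>w. norm (P j w)) summable_on Wset c" using abs_conv by (simp add: N_def)
      thus "((\<lambda>w. norm (\<beta> j) * norm (P j w)) has_sum (norm (\<beta> j) * CP j)) (Wset c)"
        unfolding CP_def by (intro has_sum_cmult_right has_sum_infsum)
    qed simp
    hence "(\<lambda>w. \<Sum>j<N. norm (\<beta> j) * norm (P j w)) summable_on Wset c" by (rule has_sum_imp_summable)
    hence sR: "(\<lambda>w. norm (cand N P \<beta> u (Inr w))) summable_on Wset c"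
    proof (rule summable_on_comparison_test)
      fix w show "norm (cand N P \<beta> u (Inr w)) \<le> (\<Sum>j<N. norm (\<beta> j) * norm (P j w))"
        unfolding cand_def by (simp add: norm_mult[symmetric] sum_norm_le)
    qed simp
    have sL: "(\<lambda>v. norm (cand N P \<beta> u (Inl v))) summable_on V"
      using V_fin by (rule summable_on_finite)
    show ?thesis unfolding SU using summable_on_sum_type[of "\<lambda>x. norm (cand N P \<beta> u x)", OF sL sR] .
  qed
  define res where "res f x = f x * complex_of_real (out_rate S Q x) - (\<Sum>\<^sub>\<infinity>y\<in>S - {x}. f y * complex_of_real (Q y x))"
    for f :: "'v + wstate \<Rightarrow> complex" and x
  have candB: "\<And>w. w \<in> Wset c \<Longrightarrow> norm (\<Sum>j<N. \<beta> j * P j w) \<le> (\<Sum>j<N. norm (\<beta> j) * CP j)" for \<beta>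
  proof -
    fix w assume w: "w \<in> Wset c"
    have "norm (\<Sum>j<N. \<beta> j * P j w) \<le> (\<Sum>j<N. norm (\<beta> j * P j w))" by (rule norm_sum)
    also have "\<dots> \<le> (\<Sum>j<N. norm (\<beta> j) * CP j)"
      by (rule sum_mono) (simp add: norm_mult mult_left_mono CP w)
    finally show "norm (\<Sum>j<N. \<beta> j * P j w) \<le> (\<Sum>j<N. norm (\<beta> j) * CP j)" .
  qed
  have interior: "res (cand N P \<beta> u) (Inr w) = 0" if w: "w \<in> Wset c" "int (fst w) \<ge> K" for \<beta> u w
  proof -
    have bwj: "((\<lambda>w'. P j w' * complex_of_real (Q (Inr w') (Inr w))) has_sum
            (P j w * complex_of_real (out_rate S Q (Inr w)))) (Wset c - {w})" if j: "j < N" for j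
      unfolding S_def by (rule st.BW[OF w _ sol]) (use CP j in \<open>auto simp: N_def\<close>)
    have "((\<lambda>w'. \<Sum>j<N. \<beta> j * (P j w' * complex_of_real (Q (Inr w') (Inr w)))) has_sum
            (\<Sum>j<N. \<beta> j * (P j w * complex_of_real (out_rate S Q (Inr w))))) (Wset c - {w})"
      by (rule has_sum_finsum) (use bwj in \<open>auto intro: has_sum_cmult_right\<close>)
    hence h1: "(((\<lambda>y. cand N P \<beta> u y * complex_of_real (Q y (Inr w))) \<circ> Inr) has_sum
            (cand N P \<beta> u (Inr w) * complex_of_real (out_rate S Q (Inr w)))) (Wset c - {w})"
      by (simp add: cand_def sum_distrib_right mult.assoc o_def)
    have h2: "((\<lambda>y. cand N P \<beta> u y * complex_of_real (Q y (Inr w))) has_sum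
            (cand N P \<beta> u (Inr w) * complex_of_real (out_rate S Q (Inr w)))) (Inr ` (Wset c - {w}))"
      using h1 by (subst has_sum_reindex) (auto simp: inj_on_def)
    have h3: "((\<lambda>y. cand N P \<beta> u y * complex_of_real (Q y (Inr w))) has_sum
            (cand N P \<beta> u (Inr w) * complex_of_real (out_rate S Q (Inr w)))) (S - {Inr w})"
      using h2 by (rule has_sum_cong_neutral[THEN iffD1, rotated -1]) (use Q_VW[OF _ w] w in \<open>auto simp: SU\<close>)
    show ?thesis unfolding res_def using infsumI[OF h3] by simp
  qed
  have pnn: "\<And>x. x \<in> S \<Longrightarrow> p x \<ge> 0" and p1: "(p has_sum 1) S"
    and pinv: "\<And>x. x \<in> S \<Longrightarrow> p x * out_rate S Q x = (\<Sum>\<^sub>\<infinity>y\<in>S - {x}. p y * Q y x)"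
    using equil unfolding is_equilibrium_def S_def by auto
  have pN: "(\<lambda>x. norm (p x)) summable_on S"
    using has_sum_imp_summable[OF p1] pnn summable_on_cong[of S "\<lambda>x. norm (p x)" p] by simp
  have scl: "r *\<^sub>R z = z * complex_of_real r" for r z by (simp add: scaleR_conv_of_real mult.commute)
  have cons: "res f summable_on S \<and> infsum (res f) S = 0"
    if fN: "(\<lambda>x. norm (f x)) summable_on S" for f
  proof -
    note C = bc.conservation[OF fN]
    have s1: "(\<lambda>x. f x * complex_of_real (out_rate S Q x)) summable_on S" using C(1) by (simp add: scl)
    have s2: "(\<lambda>x. \<Sum>\<^sub>\<infinity>y\<in>S - {x}. f y * complex_of_real (Q y x)) summable_on S" using C(2) by (simp add: scl)
    have e: "(\<Sum>\<^sub>\<infinity>x\<in>S. f x * complex_of_real (out_rate S Q x)) = (\<Sum>\<^sub>\<infinity>x\<in>S. \<Sum>\<^sub>\<infinity>y\<in>S - {x}. f y * complex_of_real (Q y x))"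
      using C(3) by (simp add: scl)
    show ?thesis unfolding res_def using summable_on_diff'[OF s1 s2] infsum_diff'[OF s1 s2] e by simp
  qed
  have uniq: "\<forall>x\<in>S. f x = infsum f S * complex_of_real (p x)"
    if fN: "(\<lambda>x. norm (f x)) summable_on S" and r0: "\<And>x. x \<in> S \<Longrightarrow> res f x = 0" for f
  proof (rule bc.unique_complex[OF irred[folded S_def] pnn p1 pinv fN])
    fix x assume x: "x \<in> S"
    have "res f x = 0" using r0[OF x] .
    thus "f x * complex_of_real (out_rate S Q x) = (\<Sum>\<^sub>\<infinity>y\<in>S - {x}. f y * complex_of_real (Q y x))"
      unfolding res_def by simp
  qed
  define Wlow where "Wlow = {w \<in> Wset c. int (fst w) < K}"
  define Bd where "Bd = Inl ` V \<union> Inr ` Wlow"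
  have Wlow_eq: "Wlow = {..<nat K} \<times> Pow {1..c}"
    unfolding Wlow_def Wset_def using K_pos by auto
  have cWlow: "card Wlow = N" unfolding Wlow_eq N_def
    by (simp add: card_cartesian_product card_Pow)
  have finWlow: "finite Wlow" unfolding Wlow_eq by simp
  have finBd: "finite Bd" unfolding Bd_def using V_fin finWlow by simp
  define n where "n = card V + N"
  have cBd: "card Bd = n" unfolding Bd_def n_def
    by (subst card_Un_disjoint) (use V_fin finWlow cWlow in \<open>auto simp: card_image inj_on_def\<close>)
  have BdS: "Bd \<subseteq> S" unfolding Bd_def SU Wlow_def by auto
  have Npos: "N > 0" unfolding N_def using K_pos by simp
  have outside: "res (cand N P \<beta> u) x = 0" if xS: "x \<in> S - Bd" for \<beta> u x
  proof -
    obtain w where w: "x = Inr w" "w \<in> Wset c" "int (fst w) \<ge> K"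
    proof (cases x)
      case (Inl v) thus ?thesis using xS unfolding SU Bd_def by auto
    next
      case (Inr w')
      hence "w' \<in> Wset c" "\<not> int (fst w') < K" using xS unfolding SU Bd_def Wlow_def by auto
      thus ?thesis using Inr by (intro that) auto
    qed
    show ?thesis using interior[OF w(2,3)] w(1) by simp
  qed
  obtain vb where vb: "bij_betw vb {0..<card V} V" using ex_bij_betw_nat_finite[OF V_fin] by blast
  obtain eb where eb: "bij_betw eb {0..<n} Bd" using ex_bij_betw_nat_finite[OF finBd] cBd by blast
  define bb where "bb j = (\<lambda>j'. if j' = j then 1 else 0 :: complex)" for j :: nat
  define bu where "bu j = (\<lambda>v. if N \<le> j \<and> v = vb (j - N) then 1 else 0 :: complex)" for j
  define fb where "fb j = cand N P (bb j) (bu j)" for j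
  define m where "m i j = res (fb j) (eb i)" for i j
  have colsum: "(\<Sum>i<n. m i j) = 0" for j
  proof -
    have "(\<Sum>i<n. m i j) = (\<Sum>x\<in>Bd. res (fb j) x)"
      unfolding m_def using sum.reindex_bij_betw[OF eb, of "res (fb j)"] by (simp add: lessThan_atLeast0)
    also have "\<dots> = infsum (res (fb j)) S"
    proof -
      have "infsum (res (fb j)) S = infsum (res (fb j)) Bd"
        by (rule infsum_cong_neutral) (use BdS outside in \<open>auto simp: fb_def\<close>)
      thus ?thesis using finBd by simp
    qed
    also have "\<dots> = 0" using cons[OF candN] by (simp add: fb_def)
    finally show ?thesis .
  qed
  obtain vv where vv: "\<exists>j<n. vv j \<noteq> 0" "\<forall>i<n. (\<Sum>j<n. m i j * vv j) = 0"
    using LA_kernel[of n m] colsum Npos n_def by auto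
  define iv where "iv = inv_into {0..<card V} vb"
  define \<beta>0 where "\<beta>0 = vv"
  define u0 where "u0 v = vv (N + iv v)" for v
  define r0 where "r0 = cand N P \<beta>0 u0"
  define comb where "comb x = (\<Sum>j<n. vv j * fb j x)" for x
  have fbW: "fb j (Inr w) = (if j < N then P j w else 0)" for j w
  proof -
    have "fb j (Inr w) = (\<Sum>j'<N. (if j' = j then 1 else 0) * P j' w)"
      unfolding fb_def cand_def bb_def by simp
    also have "\<dots> = (\<Sum>j'<N. if j' = j then P j' w else 0)" by (rule sum.cong) auto
    finally show ?thesis by (simp add: sum.delta')
  qed
  have fbV: "fb j (Inl v) = (if N \<le> j \<and> v = vb (j - N) then 1 else 0)" for j v
    unfolding fb_def cand_def bu_def by simp
  have r0comb: "r0 x = comb x" if x: "x \<in> S" for x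
  proof (cases x)
    case (Inr w)
    have "comb x = (\<Sum>j<n. if j < N then vv j * P j w else 0)"
      unfolding comb_def Inr fbW by (intro sum.cong) auto
    also have "\<dots> = (\<Sum>j\<in>{..<n} \<inter> {j. j < N}. vv j * P j w)"
      by (simp add: sum.inter_restrict)
    also have "{..<n} \<inter> {j. j < N} = {..<N}" by (auto simp: n_def)
    finally show ?thesis unfolding r0_def Inr cand_def \<beta>0_def by simp
  next
    case (Inl v)
    hence v: "v \<in> V" using x by (auto simp: SU)
    define l0 where "l0 = iv v"
    have l0: "l0 < card V" "vb l0 = v"
    proof -
      have "inv_into {0..<card V} vb v \<in> {0..<card V}"
        using v vb by (intro inv_into_into) (auto simp: bij_betw_def)
      moreover have "vb (inv_into {0..<card V} vb v) = v"
        using v vb by (intro f_inv_into_f) (auto simp: bij_betw_def)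
      ultimately show "l0 < card V" "vb l0 = v" unfolding l0_def iv_def by auto
    qed
    have cond: "(N \<le> j \<and> v = vb (j - N)) \<longleftrightarrow> j = N + l0" if "j < n" for j
    proof
      assume a: "N \<le> j \<and> v = vb (j - N)"
      hence "j - N < card V" using that by (auto simp: n_def)
      hence "j - N = l0" using a l0 vb by (auto simp: bij_betw_def inj_on_def)
      thus "j = N + l0" using a by arith
    qed (use l0 in auto)
    have "comb x = (\<Sum>j<n. if j = N + l0 then vv j else 0)"
      unfolding comb_def Inl fbV by (intro sum.cong) (auto simp: cond)
    also have "\<dots> = vv (N + l0)" using l0 by (simp add: n_def)
    finally show ?thesis unfolding r0_def Inl cand_def u0_def l0_def by simp
  qed
  have r0N: "(\<lambda>x. norm (r0 x)) summable_on S" unfolding r0_def by (rule candN)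
  have fbN: "(\<lambda>x. norm (fb j x)) summable_on S" for j unfolding fb_def by (rule candN)
  have reslin: "res r0 x = (\<Sum>j<n. vv j * res (fb j) x)" if x: "x \<in> S" for x
  proof -
    have hj: "((\<lambda>y. vv j * (fb j y * complex_of_real (Q y x))) has_sum
       (vv j * (\<Sum>\<^sub>\<infinity>y\<in>S - {x}. fb j y * complex_of_real (Q y x)))) (S - {x})" for j
    proof -
      have "(\<lambda>y. fb j y * complex_of_real (Q y x)) summable_on (S - {x})"
        using bc.inflow_summable[OF fbN x] by (simp add: scl)
      thus ?thesis by (intro has_sum_cmult_right has_sum_infsum)
    qed
    have "((\<lambda>y. \<Sum>j<n. vv j * (fb j y * complex_of_real (Q y x))) has_sum
       (\<Sum>j<n. vv j * (\<Sum>\<^sub>\<infinity>y\<in>S - {x}. fb j y * complex_of_real (Q y x)))) (S - {x})"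
      by (rule has_sum_finsum) (use hj in auto)
    hence i1: "(\<Sum>\<^sub>\<infinity>y\<in>S - {x}. comb y * complex_of_real (Q y x))
       = (\<Sum>j<n. vv j * (\<Sum>\<^sub>\<infinity>y\<in>S - {x}. fb j y * complex_of_real (Q y x)))"
      unfolding comb_def by (simp add: infsumI sum_distrib_right mult.assoc)
    have i2: "(\<Sum>\<^sub>\<infinity>y\<in>S - {x}. r0 y * complex_of_real (Q y x)) = (\<Sum>\<^sub>\<infinity>y\<in>S - {x}. comb y * complex_of_real (Q y x))"
      by (rule infsum_cong) (simp add: r0comb)
    show ?thesis unfolding res_def i2 i1 r0comb[OF x]
      by (simp add: comb_def sum_distrib_right sum_subtractf right_diff_distrib mult.assoc)
  qed
  have res0: "res r0 x = 0" if x: "x \<in> S" for x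
  proof (cases "x \<in> Bd")
    case True
    then obtain i where i: "i < n" "x = eb i" using eb by (auto simp: bij_betw_def)
    have "res r0 x = (\<Sum>j<n. vv j * res (fb j) x)" by (rule reslin[OF x])
    also have "\<dots> = (\<Sum>j<n. m i j * vv j)" by (simp add: m_def i(2) mult.commute)
    finally have "res r0 x = (\<Sum>j<n. m i j * vv j)" .
    thus ?thesis using vv(2) i(1) by simp
  next
    case False thus ?thesis using outside[of x \<beta>0 u0] x unfolding r0_def by simp
  qed
  define t where "t = infsum r0 S"
  have r0p: "\<forall>x\<in>S. r0 x = t * complex_of_real (p x)" unfolding t_def by (rule uniq[OF r0N res0])
  have tnz: "t \<noteq> 0"
  proof
    assume t0: "t = 0"
    have z: "r0 x = 0" if "x \<in> S" for x using r0p that t0 by simp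
    have zW: "\<forall>j<N. vv j = 0"
    proof (rule lin_indep[unfolded N_def[symmetric]])
      show "\<forall>w\<in>Wset c. (\<Sum>j<N. vv j * P j w) = 0"
      proof
        fix w assume "w \<in> Wset c"
        hence "r0 (Inr w) = 0" using z by (simp add: SU)
        thus "(\<Sum>j<N. vv j * P j w) = 0" unfolding r0_def cand_def \<beta>0_def by simp
      qed
    qed
    have zV: "vv (N + l) = 0" if l: "l < card V" for l
    proof -
      have "vb l \<in> V" using vb l by (auto simp: bij_betw_def)
      hence "r0 (Inl (vb l)) = 0" using z by (auto simp: SU)
      moreover have "iv (vb l) = l" unfolding iv_def using bij_betw_inv_into_left[OF vb] l by simp
      ultimately show ?thesis unfolding r0_def cand_def u0_def by simp
    qed
    have "vv j = 0" if "j < n" for j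
    proof (cases "j < N")
      case True thus ?thesis using zW by simp
    next
      case False
      hence "j = N + (j - N)" "j - N < card V" using that by (auto simp: n_def)
      thus ?thesis using zV by metis
    qed
    thus False using vv(1) by blast
  qed
  define \<alpha> where "\<alpha> j = vv j / t" for j
  have pW: "\<forall>w\<in>Wset c. complex_of_real (p (Inr w)) = (\<Sum>j<N. \<alpha> j * P j w)"
  proof
    fix w assume w: "w \<in> Wset c"
    have "r0 (Inr w) = t * complex_of_real (p (Inr w))" using r0p w by (auto simp: SU)
    hence "complex_of_real (p (Inr w)) = r0 (Inr w) / t" using tnz by (simp add: field_simps)
    thus "complex_of_real (p (Inr w)) = (\<Sum>j<N. \<alpha> j * P j w)"
      unfolding r0_def cand_def \<alpha>_def \<beta>0_def by (simp add: sum_divide_distrib)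
  qed
  define up where "up v = complex_of_real (p (Inl v))" for v
  have candp: "cand N P \<alpha> up x = complex_of_real (p x)" if x: "x \<in> S" for x
  proof (cases x)
    case (Inl v) thus ?thesis by (simp add: cand_def up_def)
  next
    case (Inr w)
    hence "w \<in> Wset c" using x by (auto simp: SU)
    thus ?thesis using pW Inr by (simp add: cand_def)
  qed
  have balp: "cand N P \<alpha> up x * complex_of_real (out_rate S Q x)
      = (\<Sum>\<^sub>\<infinity>y\<in>S - {x}. cand N P \<alpha> up y * complex_of_real (Q y x))" if x: "x \<in> S" for x
  proof -
    have sm: "(\<lambda>y. p y * Q y x) summable_on (S - {x})"
      using bc.inflow_summable[OF pN x] by (simp add: mult.commute)
    have "(\<Sum>\<^sub>\<infinity>y\<in>S - {x}. cand N P \<alpha> up y * complex_of_real (Q y x))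
        = (\<Sum>\<^sub>\<infinity>y\<in>S - {x}. complex_of_real (p y * Q y x))"
      by (rule infsum_cong) (simp add: candp)
    also have "\<dots> = complex_of_real (\<Sum>\<^sub>\<infinity>y\<in>S - {x}. p y * Q y x)"
      using has_sum_of_real[OF has_sum_infsum[OF sm]] infsumI by blast
    also have "\<dots> = complex_of_real (p x * out_rate S Q x)" using pinv[OF x] by simp
    finally show ?thesis using candp[OF x] by simp
  qed
  have normp: "(\<Sum>\<^sub>\<infinity>x\<in>S. cand N P \<alpha> up x) = 1"
  proof -
    have "(\<Sum>\<^sub>\<infinity>x\<in>S. cand N P \<alpha> up x) = (\<Sum>\<^sub>\<infinity>x\<in>S. complex_of_real (p x))"
      by (rule infsum_cong) (simp add: candp)
    also have "\<dots> = 1" using has_sum_of_real[OF p1] infsumI by fastforce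
    finally show ?thesis .
  qed
  have bsys: "boundary_sys V c K Q N P \<alpha> up"
    unfolding boundary_sys_def using balp normp by (simp add: S_def)
  have uniqsys: "\<forall>j<N. \<beta> j = \<alpha> j" if bs: "boundary_sys V c K Q N P \<beta> u" for \<beta> u
  proof -
    have r: "res (cand N P \<beta> u) x = 0" if x: "x \<in> S" for x
    proof (cases "x \<in> Bd")
      case True
      hence "(case x of Inl _ \<Rightarrow> True | Inr w \<Rightarrow> int (fst w) < K)"
        unfolding Bd_def Wlow_def by auto
      thus ?thesis using bs x unfolding boundary_sys_def res_def S_def by auto
    next
      case False thus ?thesis using outside x by simp
    qed
    have n1: "infsum (cand N P \<beta> u) S = 1" using bs unfolding boundary_sys_def S_def by simp
    have e: "cand N P \<beta> u x = complex_of_real (p x)" if "x \<in> S" for x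
      using uniq[OF candN r] n1 that by simp
    have "\<forall>j<N. \<beta> j - \<alpha> j = 0"
    proof (rule lin_indep[unfolded N_def[symmetric]], rule ballI)
      fix w assume w: "w \<in> Wset c"
      hence "Inr w \<in> S" by (simp add: SU)
      hence "cand N P \<beta> u (Inr w) = complex_of_real (p (Inr w))" by (rule e)
      hence "(\<Sum>j<N. \<beta> j * P j w) = (\<Sum>j<N. \<alpha> j * P j w)"
        using pW w by (simp add: cand_def)
      thus "(\<Sum>j<N. (\<beta> j - \<alpha> j) * P j w) = 0"
        by (simp add: left_diff_distrib sum_subtractf)
    qed
    thus ?thesis by simp
  qed
  show ?thesis
    using pW bsys uniqsys unfolding N_def up_def by blast
qed


end
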